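(* Let $C_0[-1,1]$ be the Banach space (sup norm) of continuous complex functions on $[-1,1]$ vanishing at $\pm1$. Let $\theta_1\colon[0,1]\to[-1,0]$ be a decreasing bijection and $\theta_2\colon[0,1]\to[0,1]$ an increasing bijection. For $t\in[0,1]$ let $\mathscr{N}_t=\{f\in C_0[-1,1]:\mathrm{supp}(f)\subseteq[\theta_1(t),\theta_2(t)]\}$ and $\mathfrak{N}=\{\mathscr{N}_t:t\in[0,1]\}$ (a maximal nest). Let $\varGamma([-1,1])$ be the group (under composition) of increasing bijections of $[-1,1]$, and for $\varphi\in\varGamma([-1,1])$ let $V_\varphi f=f\circ\varphi$ ($f\in C_0[-1,1]$). Then: (i) $\varGamma_{\theta_1,\theta_2}([-1,1]):=\{\varphi\in\varGamma([-1,1]):\theta_1^{-1}\circ\varphi\circ\theta_1=\theta_2^{-1}\circ\varphi\circ\theta_2\}$ is a subgroup of $\varGamma([-1,1])$; (ii) for $\varphi\in\varGamma([-1,1])$, $V_\varphi$ is a collineation of $\mathfrak{N}$ if and only if $\varphi\in\varGamma_{\theta_1,\theta_2}([-1,1])$, and hence $\mathcal{O}(\mathfrak{N})=\{V_\varphi:\varphi\in\varGamma_{\theta_1,\theta_2}([-1,1])\}$ is a subgroup of $\mathrm{Col}(\mathfrak{N})$; (iii) $\mathrm{Col}(\mathfrak{N})=\mathrm{Grp}(\mathrm{Alg}(\mathfrak{N}))\rtimes\mathcal{O}(\mathfrak{N})$.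
   Context: $\mathrm{supp}(f)=\overline{\{x:f(x)\neq0\}}$. In (i), the condition $\theta_1^{-1}\circ\varphi\circ\theta_1=\theta_2^{-1}\circ\varphi\circ\theta_2$ is understood as an equality of maps on $[0,1]$ (in particular both sides must be defined). $\mathrm{Alg}(\mathfrak{F})$ is the set of bounded operators leaving every subspace of $\mathfrak{F}$ invariant; $\mathrm{Grp}(\mathcal{A})$ is the group of invertible $S\in\mathcal{A}$ with $S^{-1}\in\mathcal{A}$. $\mathrm{Col}(\mathfrak{F})$ is the group of invertible bounded $S$ such that for every closed subspace $\mathscr{M}$: $\mathscr{M}\in\mathfrak{F}$ iff $S\mathscr{M}\in\mathfrak{F}$. For a subgroup $\mathcal{O}\subseteq\mathrm{Col}(\mathfrak{F})$, $\mathrm{Col}(\mathfrak{F})=\mathrm{Grp}(\mathrm{Alg}(\mathfrak{F}))\rtimes\mathcal{O}$ means $\mathrm{Col}(\mathfrak{F})=\{AT:A\in\mathrm{Grp}(\mathrm{Alg}(\mathfrak{F})),T\in\mathcal{O}\}$ and $\mathrm{Grp}(\mathrm{Alg}(\mathfrak{F}))\cap\mathcal{O}=\{I\}$. *)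

theory Defs
  imports "HOL-Analysis.Analysis" "HOL-Algebra.Group"
begin

text \<open>Elements of C_0[-1,1] are represented by functions real => complex that are
continuous on [-1,1], vanish at -1 and 1, and are normalised to be 0 outside [-1,1]
(so that equality of elements is plain function equality).\<close>

definition C0 :: "(real \<Rightarrow> complex) set" where
  "C0 = {f. continuous_on {-1..1} f \<and> f (-1) = 0 \<and> f 1 = 0 \<and> (\<forall>x. x \<notin> {-1..1} \<longrightarrow> f x = 0)}"

definition supnorm :: "(real \<Rightarrow> complex) \<Rightarrow> real" where
  "supnorm f = Sup ((\<lambda>x. cmod (f x)) ` {-1..1})"

definition fadd :: "(real \<Rightarrow> complex) \<Rightarrow> (real \<Rightarrow> complex) \<Rightarrow> (real \<Rightarrow> complex)" where
  "fadd f g = (\<lambda>x. f x + g x)"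

definition fdiff :: "(real \<Rightarrow> complex) \<Rightarrow> (real \<Rightarrow> complex) \<Rightarrow> (real \<Rightarrow> complex)" where
  "fdiff f g = (\<lambda>x. f x - g x)"

definition fscale :: "complex \<Rightarrow> (real \<Rightarrow> complex) \<Rightarrow> (real \<Rightarrow> complex)" where
  "fscale c f = (\<lambda>x. c * f x)"

definition fzero :: "real \<Rightarrow> complex" where
  "fzero = (\<lambda>x. 0)"

definition supp :: "(real \<Rightarrow> complex) \<Rightarrow> real set" where
  "supp f = closure {x. f x \<noteq> 0}"

definition closed_subspace :: "(real \<Rightarrow> complex) set \<Rightarrow> bool" where
  "closed_subspace M \<longleftrightarrow> M \<subseteq> C0 \<and> fzero \<in> M
     \<and> (\<forall>f\<in>M. \<forall>g\<in>M. fadd f g \<in> M) \<and> (\<forall>c. \<forall>f\<in>M. fscale c f \<in> M)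
     \<and> (\<forall>u g. (\<forall>n. u n \<in> M) \<and> g \<in> C0 \<and> (\<lambda>n. supnorm (fdiff (u n) g)) \<longlonglongrightarrow> 0 \<longrightarrow> g \<in> M)"

text \<open>Bounded linear operators, represented extensionally (value fzero off C0).\<close>
definition BOp :: "((real \<Rightarrow> complex) \<Rightarrow> (real \<Rightarrow> complex)) set" where
  "BOp = {T. (\<forall>f\<in>C0. T f \<in> C0)
       \<and> (\<forall>f\<in>C0. \<forall>g\<in>C0. T (fadd f g) = fadd (T f) (T g))
       \<and> (\<forall>c. \<forall>f\<in>C0. T (fscale c f) = fscale c (T f))
       \<and> (\<exists>K. \<forall>f\<in>C0. supnorm (T f) \<le> K * supnorm f)
       \<and> (\<forall>f. f \<notin> C0 \<longrightarrow> T f = fzero)}"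

definition Iop :: "(real \<Rightarrow> complex) \<Rightarrow> (real \<Rightarrow> complex)" where
  "Iop = (\<lambda>f. if f \<in> C0 then f else fzero)"

definition invertible_in :: "((real \<Rightarrow> complex) \<Rightarrow> (real \<Rightarrow> complex)) set
    \<Rightarrow> ((real \<Rightarrow> complex) \<Rightarrow> (real \<Rightarrow> complex)) \<Rightarrow> bool" where
  "invertible_in A S \<longleftrightarrow> (\<exists>S'\<in>A. S \<circ> S' = Iop \<and> S' \<circ> S = Iop)"

definition Alg :: "(real \<Rightarrow> complex) set set \<Rightarrow> ((real \<Rightarrow> complex) \<Rightarrow> (real \<Rightarrow> complex)) set" where
  "Alg F = {T \<in> BOp. \<forall>M\<in>F. T ` M \<subseteq> M}"

definition Grp :: "((real \<Rightarrow> complex) \<Rightarrow> (real \<Rightarrow> complex)) set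
    \<Rightarrow> ((real \<Rightarrow> complex) \<Rightarrow> (real \<Rightarrow> complex)) set" where
  "Grp A = {S \<in> A. invertible_in A S}"

definition Col :: "(real \<Rightarrow> complex) set set \<Rightarrow> ((real \<Rightarrow> complex) \<Rightarrow> (real \<Rightarrow> complex)) set" where
  "Col F = {S \<in> BOp. invertible_in BOp S
      \<and> (\<forall>M. closed_subspace M \<longrightarrow> (M \<in> F \<longleftrightarrow> S ` M \<in> F))}"

definition ColG :: "(real \<Rightarrow> complex) set set
    \<Rightarrow> ((real \<Rightarrow> complex) \<Rightarrow> (real \<Rightarrow> complex)) monoid" where
  "ColG F = \<lparr>carrier = Col F, mult = (\<lambda>S T. S \<circ> T), one = Iop\<rparr>"

definition Nt :: "(real \<Rightarrow> real) \<Rightarrow> (real \<Rightarrow> real) \<Rightarrow> real \<Rightarrow> (real \<Rightarrow> complex) set" where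
  "Nt \<theta>1 \<theta>2 t = {f \<in> C0. supp f \<subseteq> {\<theta>1 t..\<theta>2 t}}"

definition Nest :: "(real \<Rightarrow> real) \<Rightarrow> (real \<Rightarrow> real) \<Rightarrow> (real \<Rightarrow> complex) set set" where
  "Nest \<theta>1 \<theta>2 = Nt \<theta>1 \<theta>2 ` {0..1}"

text \<open>Increasing bijections of [-1,1], extended by the identity outside [-1,1]
(so that the group operation is plain composition).\<close>
definition Gamma :: "(real \<Rightarrow> real) set" where
  "Gamma = {\<phi>. bij_betw \<phi> {-1..1} {-1..1} \<and> strict_mono_on {-1..1} \<phi>
              \<and> (\<forall>x. x \<notin> {-1..1} \<longrightarrow> \<phi> x = x)}"

definition GammaG :: "(real \<Rightarrow> real) monoid" where
  "GammaG = \<lparr>carrier = Gamma, mult = (\<lambda>\<phi> \<psi>. \<phi> \<circ> \<psi>), one = id\<rparr>"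

text \<open>theta1^{-1} o phi o theta1 = theta2^{-1} o phi o theta2 on [0,1], both sides defined.\<close>
definition Gamma_th :: "(real \<Rightarrow> real) \<Rightarrow> (real \<Rightarrow> real) \<Rightarrow> (real \<Rightarrow> real) set" where
  "Gamma_th \<theta>1 \<theta>2 = {\<phi> \<in> Gamma. \<forall>t\<in>{0..1}.
       \<phi> (\<theta>1 t) \<in> {-1..0} \<and> \<phi> (\<theta>2 t) \<in> {0..1}
     \<and> inv_into {0..1} \<theta>1 (\<phi> (\<theta>1 t)) = inv_into {0..1} \<theta>2 (\<phi> (\<theta>2 t))}"

definition Vop :: "(real \<Rightarrow> real) \<Rightarrow> (real \<Rightarrow> complex) \<Rightarrow> (real \<Rightarrow> complex)" where
  "Vop \<phi> = (\<lambda>f. if f \<in> C0 then (\<lambda>x. if x \<in> {-1..1} then f (\<phi> x) else 0) else fzero)"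

end

theory Submission
  imports Defs
begin

abbreviation II :: "real set" where "II \<equiv> {-1..1}"

lemma GammaD:
  assumes "\<phi> \<in> Gamma"
  shows "bij_betw \<phi> II II" "\<And>x. x \<in> II \<Longrightarrow> \<phi> x \<in> II"
    "\<And>x y. x \<in> II \<Longrightarrow> y \<in> II \<Longrightarrow> x < y \<Longrightarrow> \<phi> x < \<phi> y"
    "\<And>x. x \<notin> II \<Longrightarrow> \<phi> x = x"
  using assms unfolding Gamma_def
  by (auto simp: bij_betw_def strict_mono_on_def)

lemma Gamma_le_iff:
  assumes "\<phi> \<in> Gamma" "x \<in> II" "y \<in> II"
  shows "\<phi> x \<le> \<phi> y \<longleftrightarrow> x \<le> y" "\<phi> x < \<phi> y \<longleftrightarrow> x < y" "\<phi> x = \<phi> y \<longleftrightarrow> x = y"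
  using GammaD(3)[OF assms(1)] assms(2,3)
  by (metis linorder_not_le order_less_irrefl order_le_less)+

lemma Gamma_surj:
  assumes "\<phi> \<in> Gamma" "y \<in> II"
  obtains x where "x \<in> II" "\<phi> x = y"
proof -
  have "y \<in> \<phi> ` II" using GammaD(1)[OF assms(1)] assms(2) unfolding bij_betw_def by auto
  then show ?thesis using that by blast
qed

definition ginv :: "(real \<Rightarrow> real) \<Rightarrow> real \<Rightarrow> real" where
  "ginv \<phi> = (\<lambda>x. if x \<in> II then inv_into II \<phi> x else x)"

lemma ginv_Gamma:
  assumes "\<phi> \<in> Gamma"
  shows "ginv \<phi> \<in> Gamma" "\<phi> \<circ> ginv \<phi> = id" "ginv \<phi> \<circ> \<phi> = id"
proof -
  have b: "bij_betw \<phi> II II" using GammaD(1)[OF assms] .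
  have b2: "bij_betw (inv_into II \<phi>) II II" using bij_betw_inv_into[OF b] .
  have fi: "\<And>x. x \<in> II \<Longrightarrow> \<phi> (inv_into II \<phi> x) = x"
    using b by (simp add: bij_betw_inv_into_right)
  have if_: "\<And>x. x \<in> II \<Longrightarrow> inv_into II \<phi> (\<phi> x) = x"
    using b by (simp add: bij_betw_inv_into_left)
  have ii: "\<And>x. x \<in> II \<Longrightarrow> inv_into II \<phi> x \<in> II"
    using b2 by (auto simp: bij_betw_def)
  have bg: "bij_betw (ginv \<phi>) II II"
    using b2 by (rule bij_betw_cong[THEN iffD1, rotated]) (simp add: ginv_def)
  have sm: "strict_mono_on II (ginv \<phi>)"
  proof (rule strict_mono_onI)
    fix x y assume xy: "x \<in> II" "y \<in> II" "x < y"
    show "ginv \<phi> x < ginv \<phi> y"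
      using xy Gamma_le_iff(2)[OF assms ii[of x] ii[of y]] fi[of x] fi[of y]
      by (simp add: ginv_def)
  qed
  show "ginv \<phi> \<in> Gamma" unfolding Gamma_def using bg sm by (simp add: ginv_def)
  show "\<phi> \<circ> ginv \<phi> = id"
    using fi GammaD(4)[OF assms] by (auto simp: ginv_def fun_eq_iff)
  show "ginv \<phi> \<circ> \<phi> = id"
  proof
    fix x show "(ginv \<phi> \<circ> \<phi>) x = id x"
      using if_[of x] GammaD(2,4)[OF assms, of x] by (cases "x \<in> II") (auto simp: ginv_def)
  qed
qed

lemma Gamma_comp:
  assumes "\<phi> \<in> Gamma" "\<psi> \<in> Gamma"
  shows "\<phi> \<circ> \<psi> \<in> Gamma"
proof -
  have "bij_betw (\<phi> \<circ> \<psi>) II II"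
    using GammaD(1)[OF assms(1)] GammaD(1)[OF assms(2)] by (rule bij_betw_trans[rotated])
  moreover have "strict_mono_on II (\<phi> \<circ> \<psi>)"
  proof (rule strict_mono_onI)
    fix r s assume rs: "r \<in> II" "s \<in> II" "r < s"
    then have "\<psi> r \<in> II" "\<psi> s \<in> II" "\<psi> r < \<psi> s" using GammaD(2,3)[OF assms(2)] by auto
    then show "(\<phi> \<circ> \<psi>) r < (\<phi> \<circ> \<psi>) s" using GammaD(3)[OF assms(1)] by simp
  qed
  moreover have "\<forall>x. x \<notin> II \<longrightarrow> (\<phi> \<circ> \<psi>) x = x"
    using GammaD(4)[OF assms(1)] GammaD(4)[OF assms(2)] by simp
  ultimately show ?thesis unfolding Gamma_def by simp
qed

lemma id_Gamma: "id \<in> Gamma"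
  unfolding Gamma_def by (auto simp: strict_mono_on_def)

lemma group_GammaG: "group GammaG"
proof (rule groupI)
  show "\<exists>y\<in>carrier GammaG. y \<otimes>\<^bsub>GammaG\<^esub> x = \<one>\<^bsub>GammaG\<^esub>" if "x \<in> carrier GammaG" for x
    using ginv_Gamma that by (auto simp: GammaG_def)
qed (auto simp: GammaG_def Gamma_comp id_Gamma o_assoc)

lemma inv_GammaG: "\<phi> \<in> Gamma \<Longrightarrow> inv\<^bsub>GammaG\<^esub> \<phi> = ginv \<phi>"
  using group.inv_equality[OF group_GammaG, of "ginv \<phi>" \<phi>] ginv_Gamma[of \<phi>]
  by (simp add: GammaG_def)

lemma Gamma_cont: assumes "\<phi> \<in> Gamma" shows "continuous_on UNIV \<phi>"
proof (rule continuous_onI_mono)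
  have "surj \<phi>"
  proof -
    have "y \<in> range \<phi>" for y
    proof (cases "y \<in> II")
      case True then obtain x where "\<phi> x = y" using Gamma_surj[OF assms True] by metis
      then show ?thesis by blast
    next
      case False then show ?thesis using GammaD(4)[OF assms False] by (metis rangeI)
    qed
    then show ?thesis by auto
  qed
  then show "open (range \<phi>)" by simp
  fix x y :: real assume "x \<le> y"
  then show "\<phi> x \<le> \<phi> y"
    using GammaD(2,4)[OF assms] Gamma_le_iff(1)[OF assms, of x y]
    by (cases "x \<in> II"; cases "y \<in> II") (force simp: atLeastAtMost_iff)+
qed

lemma Gamma_ends: assumes "\<phi> \<in> Gamma" shows "\<phi> (-1) = -1" "\<phi> 1 = 1"
proof -
  obtain y where y: "y \<in> II" "\<phi> y = -1" using Gamma_surj[OF assms, of "-1"] by auto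
  have "y = -1"
  proof (rule ccontr)
    assume "y \<noteq> -1" then have "-1 < y" using y by auto
    then have "\<phi> (-1) < \<phi> y" using GammaD(3)[OF assms, of "-1" y] y by auto
    then show False using GammaD(2)[OF assms, of "-1"] y by auto
  qed
  then show "\<phi> (-1) = -1" using y by simp
  obtain z where z: "z \<in> II" "\<phi> z = 1" using Gamma_surj[OF assms, of "1"] by auto
  have "z = 1"
  proof (rule ccontr)
    assume "z \<noteq> 1" then have "z < 1" using z by auto
    then have "\<phi> z < \<phi> 1" using GammaD(3)[OF assms, of z 1] z by auto
    then show False using GammaD(2)[OF assms, of "1"] z by auto
  qed
  then show "\<phi> 1 = 1" using z by simp
qed

lemma C0D: assumes "f \<in> C0"
  shows "continuous_on II f" "f (-1) = 0" "f 1 = 0" "\<And>x. x \<notin> II \<Longrightarrow> f x = 0"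
  using assms unfolding C0_def by auto

lemma C0_fadd: "f \<in> C0 \<Longrightarrow> g \<in> C0 \<Longrightarrow> fadd f g \<in> C0"
  unfolding C0_def fadd_def by (auto intro: continuous_on_add)

lemma C0_fscale: "f \<in> C0 \<Longrightarrow> fscale c f \<in> C0"
  unfolding C0_def fscale_def by (auto intro: continuous_on_mult continuous_on_const)

lemma C0_fdiff: "f \<in> C0 \<Longrightarrow> g \<in> C0 \<Longrightarrow> fdiff f g \<in> C0"
  unfolding C0_def fdiff_def by (auto intro: continuous_on_diff)

lemma C0_fzero: "fzero \<in> C0"
  unfolding C0_def fzero_def by auto

lemma fdiff_eq: "fdiff f g = fadd f (fscale (-1) g)"
  unfolding fdiff_def fadd_def fscale_def by auto

lemma C0_bdd: assumes "f \<in> C0" shows "bdd_above ((\<lambda>x. cmod (f x)) ` II)"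
proof -
  have "continuous_on II (\<lambda>x. cmod (f x))"
    using C0D(1)[OF assms] by (intro continuous_on_norm)
  then have "compact ((\<lambda>x. cmod (f x)) ` II)"
    by (intro compact_continuous_image) auto
  then show ?thesis by (intro bounded_imp_bdd_above compact_imp_bounded)
qed

lemma C0_le_supnorm: assumes "f \<in> C0" "x \<in> II" shows "cmod (f x) \<le> supnorm f"
  unfolding supnorm_def using C0_bdd[OF assms(1)] assms(2) by (intro cSup_upper) auto

lemma supnorm_nonneg: assumes "f \<in> C0" shows "0 \<le> supnorm f"
  using C0_le_supnorm[OF assms, of 0] by (meson norm_ge_zero order_trans atLeastAtMost_iff
    le_minus_one_simps(1) zero_less_one_class.zero_le_one)

lemma BOpD: assumes "T \<in> BOp"
  shows "\<And>f. f \<in> C0 \<Longrightarrow> T f \<in> C0"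
    "\<And>f g. f \<in> C0 \<Longrightarrow> g \<in> C0 \<Longrightarrow> T (fadd f g) = fadd (T f) (T g)"
    "\<And>c f. f \<in> C0 \<Longrightarrow> T (fscale c f) = fscale c (T f)"
    "\<And>f. f \<notin> C0 \<Longrightarrow> T f = fzero"
  using assms unfolding BOp_def by auto

lemma BOp_K: assumes "T \<in> BOp" obtains K where "K \<ge> 0" "\<And>f. f \<in> C0 \<Longrightarrow> supnorm (T f) \<le> K * supnorm f"
proof -
  obtain K where K: "\<And>f. f \<in> C0 \<Longrightarrow> supnorm (T f) \<le> K * supnorm f" using assms unfolding BOp_def by blast
  have "supnorm (T f) \<le> max K 0 * supnorm f" if "f \<in> C0" for f
    using K[OF that] supnorm_nonneg[OF that]
    by (metis max.cobounded1 mult_right_mono order_trans)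
  then show ?thesis using that[of "max K 0"] by auto
qed

lemma BOp_zero: assumes "T \<in> BOp" shows "T fzero = fzero"
proof -
  have "T fzero = T (fscale 0 fzero)" by (simp add: fscale_def fzero_def)
  also have "\<dots> = fscale 0 (T fzero)" using BOpD(3)[OF assms C0_fzero] .
  also have "\<dots> = fzero" by (simp add: fscale_def fzero_def)
  finally show ?thesis .
qed

lemma BOp_diff: assumes "T \<in> BOp" "f \<in> C0" "g \<in> C0" shows "T (fdiff f g) = fdiff (T f) (T g)"
  using assms by (simp add: fdiff_eq BOpD C0_fscale)

lemma BOp_comp: assumes "S \<in> BOp" "T \<in> BOp" shows "S \<circ> T \<in> BOp"
proof -
  obtain K1 where K1: "K1 \<ge> 0" "\<And>f. f \<in> C0 \<Longrightarrow> supnorm (S f) \<le> K1 * supnorm f" using BOp_K[OF assms(1)] by auto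
  obtain K2 where K2: "K2 \<ge> 0" "\<And>f. f \<in> C0 \<Longrightarrow> supnorm (T f) \<le> K2 * supnorm f" using BOp_K[OF assms(2)] by auto
  have "supnorm (S (T f)) \<le> (K1 * K2) * supnorm f" if "f \<in> C0" for f
  proof -
    have "supnorm (S (T f)) \<le> K1 * supnorm (T f)" using K1(2) BOpD(1)[OF assms(2) that] by auto
    also have "\<dots> \<le> K1 * (K2 * supnorm f)" using K2(2)[OF that] K1(1) by (simp add: mult_left_mono)
    finally show ?thesis by simp
  qed
  then show ?thesis using assms unfolding BOp_def
    by (auto simp: C0_fadd C0_fscale BOp_zero[OF assms(1)])
qed

lemma Iop_BOp: "Iop \<in> BOp"
  unfolding BOp_def Iop_def by (auto simp: C0_fadd C0_fscale C0_fzero intro: exI[of _ 1])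

lemma Iop_left: assumes "T \<in> BOp" shows "Iop \<circ> T = T"
proof
  fix f show "(Iop \<circ> T) f = T f"
    using BOpD(1,4)[OF assms, of f] C0_fzero by (cases "f \<in> C0") (auto simp: Iop_def)
qed

lemma Iop_right: "T \<in> BOp \<Longrightarrow> T \<circ> Iop = T"
  unfolding Iop_def by (auto simp: fun_eq_iff BOpD BOp_zero)

lemma Vop_C0: assumes "\<phi> \<in> Gamma" "f \<in> C0" shows "Vop \<phi> f \<in> C0"
proof -
  have c: "continuous_on II (f \<circ> \<phi>)"
  proof (rule continuous_on_compose)
    show "continuous_on II \<phi>" using Gamma_cont[OF assms(1)] by (rule continuous_on_subset) auto
    have "\<phi> ` II = II" using GammaD(1)[OF assms(1)] by (simp add: bij_betw_def)
    then show "continuous_on (\<phi> ` II) f" using C0D(1)[OF assms(2)] by simp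
  qed
  have "continuous_on II (Vop \<phi> f)"
    using c by (rule continuous_on_cong[THEN iffD1, rotated 2]) (auto simp: Vop_def assms(2))
  then show ?thesis unfolding C0_def using assms(2) Gamma_ends[OF assms(1)] C0D(2,3)[OF assms(2)]
    by (auto simp: Vop_def)
qed

lemma Vop_supnorm: assumes "\<phi> \<in> Gamma" "f \<in> C0" shows "supnorm (Vop \<phi> f) = supnorm f"
proof -
  have im: "\<phi> ` II = II" using GammaD(1)[OF assms(1)] by (simp add: bij_betw_def)
  have "(\<lambda>x. cmod (Vop \<phi> f x)) ` II = (\<lambda>x. cmod (f x)) ` (\<phi> ` II)"
    using assms(2) by (auto simp: Vop_def image_image)
  then show ?thesis unfolding supnorm_def using im by simp
qed

lemma Vop_BOp: assumes "\<phi> \<in> Gamma" shows "Vop \<phi> \<in> BOp"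
proof -
  have a: "Vop \<phi> (fadd f g) = fadd (Vop \<phi> f) (Vop \<phi> g)" if "f \<in> C0" "g \<in> C0" for f g
    using C0_fadd[OF that] that by (simp add: Vop_def fadd_def fun_eq_iff)
  have b: "Vop \<phi> (fscale c f) = fscale c (Vop \<phi> f)" if "f \<in> C0" for c f
    using C0_fscale[OF that] that by (simp add: Vop_def fscale_def fun_eq_iff)
  show ?thesis
    unfolding BOp_def using Vop_C0[OF assms] Vop_supnorm[OF assms] a b
    by (auto simp: Vop_def intro: exI[of _ 1])
qed

lemma Vop_comp: assumes "\<phi> \<in> Gamma" "\<psi> \<in> Gamma" shows "Vop \<phi> \<circ> Vop \<psi> = Vop (\<psi> \<circ> \<phi>)"
proof
  fix f show "(Vop \<phi> \<circ> Vop \<psi>) f = Vop (\<psi> \<circ> \<phi>) f"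
  proof (cases "f \<in> C0")
    case True
    then show ?thesis using Vop_C0[OF assms(2) True] GammaD(2)[OF assms(1)]
      by (auto simp: Vop_def fun_eq_iff)
  next
    case False
    then show ?thesis using C0_fzero by (auto simp: Vop_def fzero_def fun_eq_iff)
  qed
qed

lemma Vop_id: "Vop id = Iop"
  unfolding Vop_def Iop_def using C0D(4) by (auto simp: fun_eq_iff)

lemma Vop_inv: assumes "\<phi> \<in> Gamma"
  shows "Vop \<phi> \<circ> Vop (ginv \<phi>) = Iop" "Vop (ginv \<phi>) \<circ> Vop \<phi> = Iop"
  using Vop_comp[OF assms ginv_Gamma(1)[OF assms]] Vop_comp[OF ginv_Gamma(1)[OF assms] assms]
    ginv_Gamma[OF assms] Vop_id by auto

lemma ginv_ginv: assumes "\<phi> \<in> Gamma" shows "ginv (ginv \<phi>) = \<phi>"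
  using group.inv_inv[OF group_GammaG, of \<phi>] inv_GammaG[of \<phi>] inv_GammaG[of "ginv \<phi>"]
    ginv_Gamma(1)[OF assms] assms by (simp add: GammaG_def)

lemma ginv_app: assumes "\<phi> \<in> Gamma"
  shows "\<And>x. \<phi> (ginv \<phi> x) = x" "\<And>x. ginv \<phi> (\<phi> x) = x"
  using ginv_Gamma(2,3)[OF assms] by (auto simp: fun_eq_iff)

definition Z :: "real \<Rightarrow> real \<Rightarrow> (real \<Rightarrow> complex) set" where
  "Z a b = {f \<in> C0. \<forall>x. f x \<noteq> 0 \<longrightarrow> a \<le> x \<and> x \<le> b}"

lemma supp_sub_iff: "supp f \<subseteq> {a..b} \<longleftrightarrow> (\<forall>x. f x \<noteq> 0 \<longrightarrow> a \<le> x \<and> x \<le> b)"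
proof
  assume "supp f \<subseteq> {a..b}"
  then show "\<forall>x. f x \<noteq> 0 \<longrightarrow> a \<le> x \<and> x \<le> b"
    unfolding supp_def using closure_subset[of "{x. f x \<noteq> 0}"] by auto
next
  assume "\<forall>x. f x \<noteq> 0 \<longrightarrow> a \<le> x \<and> x \<le> b"
  then show "supp f \<subseteq> {a..b}" unfolding supp_def by (intro closure_minimal) auto
qed

lemma Nt_Z: "Nt \<theta>1 \<theta>2 t = Z (\<theta>1 t) (\<theta>2 t)"
  unfolding Nt_def Z_def supp_sub_iff by simp

lemma Z_C0: "Z a b \<subseteq> C0" unfolding Z_def by auto

lemma Vop_Z_sub: assumes "\<phi> \<in> Gamma" "a \<in> II" "b \<in> II"
  shows "Vop \<phi> ` Z a b \<subseteq> Z (ginv \<phi> a) (ginv \<phi> b)"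
proof
  fix g assume "g \<in> Vop \<phi> ` Z a b"
  then obtain f where f: "f \<in> Z a b" "g = Vop \<phi> f" by auto
  have fC: "f \<in> C0" using f Z_def by auto
  have ga: "ginv \<phi> a \<in> II" "\<phi> (ginv \<phi> a) = a" using GammaD(2)[OF ginv_Gamma(1)[OF assms(1)]] assms ginv_app[OF assms(1)] by auto
  have gb: "ginv \<phi> b \<in> II" "\<phi> (ginv \<phi> b) = b" using GammaD(2)[OF ginv_Gamma(1)[OF assms(1)]] assms ginv_app[OF assms(1)] by auto
  have "ginv \<phi> a \<le> x \<and> x \<le> ginv \<phi> b" if "g x \<noteq> 0" for x
  proof -
    have x: "x \<in> II" "f (\<phi> x) \<noteq> 0" using that f fC by (auto simp: Vop_def split: if_splits)
    then have "a \<le> \<phi> x" "\<phi> x \<le> b" using f(1) by (auto simp: Z_def)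
    then show ?thesis using Gamma_le_iff(1)[OF assms(1) ga(1) x(1)] Gamma_le_iff(1)[OF assms(1) x(1) gb(1)] ga gb by simp
  qed
  then show "g \<in> Z (ginv \<phi> a) (ginv \<phi> b)" using Vop_C0[OF assms(1) fC] f by (auto simp: Z_def)
qed

lemma Vop_Z: assumes "\<phi> \<in> Gamma" "a \<in> II" "b \<in> II"
  shows "Vop \<phi> ` Z a b = Z (ginv \<phi> a) (ginv \<phi> b)"
proof
  show "Vop \<phi> ` Z a b \<subseteq> Z (ginv \<phi> a) (ginv \<phi> b)" by (rule Vop_Z_sub[OF assms])
  let ?\<psi> = "ginv \<phi>"
  have psi: "?\<psi> \<in> Gamma" using ginv_Gamma(1)[OF assms(1)] .
  have ab: "?\<psi> a \<in> II" "?\<psi> b \<in> II" using GammaD(2)[OF psi] assms by auto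
  show "Z (ginv \<phi> a) (ginv \<phi> b) \<subseteq> Vop \<phi> ` Z a b"
  proof
    fix g assume g: "g \<in> Z (?\<psi> a) (?\<psi> b)"
    have "Vop ?\<psi> g \<in> Z (ginv ?\<psi> (?\<psi> a)) (ginv ?\<psi> (?\<psi> b))"
      using Vop_Z_sub[OF psi ab] g by auto
    then have inZ: "Vop ?\<psi> g \<in> Z a b" using ginv_ginv[OF assms(1)] ginv_app[OF assms(1)] by simp
    have gC: "g \<in> C0" using g Z_C0 by blast
    have "Vop \<phi> (Vop ?\<psi> g) = g"
      using Vop_inv(1)[OF assms(1)] gC by (auto simp: Iop_def fun_eq_iff dest!: fun_cong[where x=g])
    then show "g \<in> Vop \<phi> ` Z a b" using inZ by (metis image_eqI)
  qed
qed

definition tent :: "real \<Rightarrow> real \<Rightarrow> real \<Rightarrow> complex" where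
  "tent a b = (\<lambda>x. complex_of_real (max 0 (min (x - a) (b - x))))"

lemma tent_Z: assumes "a \<in> II" "b \<in> II" shows "tent a b \<in> Z a b"
proof -
  have c: "continuous_on II (tent a b)" unfolding tent_def by (intro continuous_intros)
  have z: "tent a b x = 0" if "\<not> (a < x \<and> x < b)" for x
    using that unfolding tent_def by (auto simp: max_def min_def)
  have m1: "tent a b (-1) = 0" using assms by (intro z) auto
  have p1: "tent a b 1 = 0" using assms by (intro z) auto
  have o: "\<forall>x. x \<notin> II \<longrightarrow> tent a b x = 0" using assms z by auto
  have "tent a b \<in> C0" unfolding C0_def using c m1 p1 o by blast
  moreover have "\<forall>x. tent a b x \<noteq> 0 \<longrightarrow> a \<le> x \<and> x \<le> b"
  proof (intro allI impI)
    fix x assume "tent a b x \<noteq> 0" then have "a < x \<and> x < b" using z by blast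
    then show "a \<le> x \<and> x \<le> b" by auto
  qed
  ultimately show ?thesis unfolding Z_def by blast
qed

lemma tent_nz: "a < x \<Longrightarrow> x < b \<Longrightarrow> tent a b x \<noteq> 0"
  unfolding tent_def by auto

lemma Z_sub: assumes "a \<in> II" "b \<in> II" "a < b" "Z a b \<subseteq> Z a' b'"
  shows "a' \<le> a" "b \<le> b'"
proof -
  have *: "a' \<le> x \<and> x \<le> b'" if "a < x" "x < b" for x
    using tent_Z[OF assms(1,2)] assms(4) tent_nz[OF that] by (auto simp: Z_def)
  show "a' \<le> a"
  proof (rule ccontr)
    assume "\<not> a' \<le> a"
    define x where "x = (a + min a' b) / 2"
    have "a < x" "x < b" "x < a'" using assms(3) \<open>\<not> a' \<le> a\<close> by (auto simp: x_def min_def)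
    then show False using *[of x] by auto
  qed
  show "b \<le> b'"
  proof (rule ccontr)
    assume "\<not> b \<le> b'"
    define x where "x = (b + max b' a) / 2"
    have "a < x" "x < b" "b' < x" using assms(3) \<open>\<not> b \<le> b'\<close> by (auto simp: x_def max_def)
    then show False using *[of x] by auto
  qed
qed

lemma Z_closed: "closed_subspace (Z a b)"
proof -
  have lim: "g \<in> Z a b" if u: "\<forall>n. u n \<in> Z a b" and g: "g \<in> C0" and
      t: "(\<lambda>n. supnorm (fdiff (u n) g)) \<longlonglongrightarrow> 0" for u g
  proof -
    have "g x = 0" if x: "\<not> (a \<le> x \<and> x \<le> b)" for x
    proof (cases "x \<in> II")
      case True
      have "cmod (g x) \<le> supnorm (fdiff (u n) g)" for n
      proof -
        have "u n x = 0" using u x by (auto simp: Z_def)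
        then have "cmod (g x) = cmod (fdiff (u n) g x)" by (simp add: fdiff_def)
        also have "\<dots> \<le> supnorm (fdiff (u n) g)"
          using C0_le_supnorm[OF C0_fdiff[OF _ g] True] u Z_C0 by blast
        finally show ?thesis .
      qed
      then have "cmod (g x) \<le> 0" using t by (intro LIMSEQ_le_const[OF t]) auto
      then show ?thesis by simp
    next
      case False then show ?thesis using C0D(4)[OF g] by simp
    qed
    then show ?thesis using g unfolding Z_def by auto
  qed
  have z: "fzero \<in> Z a b" using C0_fzero by (simp add: Z_def fzero_def)
  have ad: "fadd f g \<in> Z a b" if "f \<in> Z a b" "g \<in> Z a b" for f g
  proof -
    have "fadd f g \<in> C0" using that Z_C0 C0_fadd by blast
    moreover have "a \<le> x \<and> x \<le> b" if "fadd f g x \<noteq> 0" for x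
    proof -
      have "f x \<noteq> 0 \<or> g x \<noteq> 0" using that by (auto simp: fadd_def)
      then show ?thesis using \<open>f \<in> Z a b\<close> \<open>g \<in> Z a b\<close> unfolding Z_def by blast
    qed
    ultimately show ?thesis unfolding Z_def by blast
  qed
  have sc: "fscale c f \<in> Z a b" if "f \<in> Z a b" for c f
  proof -
    have "fscale c f \<in> C0" using that Z_C0 C0_fscale by blast
    moreover have "a \<le> x \<and> x \<le> b" if "fscale c f x \<noteq> 0" for x
    proof -
      have "f x \<noteq> 0" using that by (auto simp: fscale_def)
      then show ?thesis using \<open>f \<in> Z a b\<close> unfolding Z_def by blast
    qed
    ultimately show ?thesis unfolding Z_def by blast
  qed
  show ?thesis unfolding closed_subspace_def
    using Z_C0 z ad sc lim by blast
qed

lemma Z_mono: "a' \<le> a \<Longrightarrow> b \<le> b' \<Longrightarrow> Z a b \<subseteq> Z a' b'"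
  unfolding Z_def by force

lemma closed_subspaceD: assumes "closed_subspace M"
  shows "M \<subseteq> C0" "fzero \<in> M" "\<And>f g. f \<in> M \<Longrightarrow> g \<in> M \<Longrightarrow> fadd f g \<in> M"
    "\<And>c f. f \<in> M \<Longrightarrow> fscale c f \<in> M"
    "\<And>u g. (\<And>n. u n \<in> M) \<Longrightarrow> g \<in> C0 \<Longrightarrow> (\<lambda>n. supnorm (fdiff (u n) g)) \<longlonglongrightarrow> 0 \<Longrightarrow> g \<in> M"
  using assms unfolding closed_subspace_def by blast+

lemma Iop_app: "f \<in> C0 \<Longrightarrow> Iop f = f" by (simp add: Iop_def)

lemma inv_app: assumes "S \<circ> S' = Iop" "f \<in> C0" shows "S (S' f) = f"
  using fun_cong[OF assms(1), of f] assms(2) by (simp add: Iop_def)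

lemma img_closed:
  assumes S: "S \<in> BOp" and S': "S' \<in> BOp" and i1: "S \<circ> S' = Iop" and i2: "S' \<circ> S = Iop"
    and M: "closed_subspace M"
  shows "closed_subspace (S ` M)"
proof -
  note Md = closed_subspaceD[OF M]
  have sub: "S ` M \<subseteq> C0" using Md(1) BOpD(1)[OF S] by blast
  have z: "fzero \<in> S ` M" using BOp_zero[OF S] Md(2) by (metis image_eqI)
  have ad: "fadd f g \<in> S ` M" if fg: "f \<in> S ` M" "g \<in> S ` M" for f g
  proof -
    obtain f' g' where "f' \<in> M" "g' \<in> M" "f = S f'" "g = S g'" using fg by blast
    then show ?thesis using BOpD(2)[OF S, of f' g'] Md(1,3) by (metis image_eqI subsetD)
  qed
  have sc: "fscale c f \<in> S ` M" if fS: "f \<in> S ` M" for c f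
  proof -
    obtain f' where "f' \<in> M" "f = S f'" using fS by blast
    then show ?thesis using BOpD(3)[OF S, of f' c] Md(1,4) by (metis image_eqI subsetD)
  qed
  have lim: "g \<in> S ` M" if u: "\<forall>n. u n \<in> S ` M" and g: "g \<in> C0"
    and t: "(\<lambda>n. supnorm (fdiff (u n) g)) \<longlonglongrightarrow> 0" for u g
  proof -
    obtain K where K: "K \<ge> 0" "\<And>f. f \<in> C0 \<Longrightarrow> supnorm (S' f) \<le> K * supnorm f"
      using BOp_K[OF S'] by blast
    define v where "v n = S' (u n)" for n
    have uC: "u n \<in> C0" for n using u sub by blast
    have vM: "v n \<in> M" for n
    proof -
      obtain m where "m \<in> M" "u n = S m" using u by blast
      then show ?thesis unfolding v_def using inv_app[OF i2, of m] Md(1) by auto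
    qed
    have gC': "S' g \<in> C0" using BOpD(1)[OF S' g] .
    have "(\<lambda>n. supnorm (fdiff (v n) (S' g))) \<longlonglongrightarrow> 0"
    proof (rule tendsto_sandwich[where f="\<lambda>_. 0" and h="\<lambda>n. K * supnorm (fdiff (u n) g)"])
      show "\<forall>\<^sub>F n in sequentially. 0 \<le> supnorm (fdiff (v n) (S' g))"
        using vM Md(1) gC' by (intro always_eventually allI supnorm_nonneg C0_fdiff) auto
      have "supnorm (fdiff (v n) (S' g)) \<le> K * supnorm (fdiff (u n) g)" for n
        using BOp_diff[OF S' uC g] K(2)[OF C0_fdiff[OF uC g]] unfolding v_def by simp
      then show "\<forall>\<^sub>F n in sequentially. supnorm (fdiff (v n) (S' g)) \<le> K * supnorm (fdiff (u n) g)"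
        by simp
      show "(\<lambda>n. K * supnorm (fdiff (u n) g)) \<longlonglongrightarrow> 0"
        using tendsto_mult_right_zero[OF t, of K] .
    qed simp
    then have "S' g \<in> M" using Md(5)[of v, OF vM gC'] by blast
    moreover have "S (S' g) = g" using inv_app[OF i1 g] .
    ultimately show ?thesis by (metis image_eqI)
  qed
  show ?thesis unfolding closed_subspace_def using sub z ad sc lim by blast
qed

lemma ColD: assumes "S \<in> Col F"
  shows "S \<in> BOp" "\<exists>S'\<in>BOp. S \<circ> S' = Iop \<and> S' \<circ> S = Iop"
    "\<And>M. closed_subspace M \<Longrightarrow> M \<in> F \<longleftrightarrow> S ` M \<in> F"
  using assms unfolding Col_def invertible_in_def by blast+

lemma img_inv: assumes "S' \<circ> S = Iop" "M \<subseteq> C0" shows "S' ` S ` M = M"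
  using inv_app[OF assms(1)] assms(2) by (force simp: image_image)

lemma Col_inv: assumes "S \<in> Col F" "S' \<in> BOp" "S \<circ> S' = Iop" "S' \<circ> S = Iop"
  shows "S' \<in> Col F"
proof -
  have S: "S \<in> BOp" using ColD(1)[OF assms(1)] .
  have "M \<in> F \<longleftrightarrow> S' ` M \<in> F" if M: "closed_subspace M" for M
  proof -
    have c: "closed_subspace (S' ` M)" using img_closed[OF assms(2) S assms(4,3) M] .
    have "S ` S' ` M = M" using img_inv[OF assms(3) closed_subspaceD(1)[OF M]] .
    then show ?thesis using ColD(3)[OF assms(1) c] by simp
  qed
  then show ?thesis unfolding Col_def invertible_in_def using assms S by blast
qed

lemma Col_comp: assumes "S \<in> Col F" "T \<in> Col F" shows "S \<circ> T \<in> Col F"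
proof -
  have S: "S \<in> BOp" and T: "T \<in> BOp" using ColD(1) assms by auto
  obtain S' where S': "S' \<in> BOp" "S \<circ> S' = Iop" "S' \<circ> S = Iop" using ColD(2)[OF assms(1)] by blast
  obtain T' where T': "T' \<in> BOp" "T \<circ> T' = Iop" "T' \<circ> T = Iop" using ColD(2)[OF assms(2)] by blast
  have "(S \<circ> T) \<circ> (T' \<circ> S') = S \<circ> ((T \<circ> T') \<circ> S')" by (simp add: o_assoc)
  also have "\<dots> = Iop" using T'(2) Iop_left[OF S'(1)] S'(2) by simp
  finally have i1: "(S \<circ> T) \<circ> (T' \<circ> S') = Iop" .
  have "(T' \<circ> S') \<circ> (S \<circ> T) = T' \<circ> ((S' \<circ> S) \<circ> T)" by (simp add: o_assoc)
  also have "\<dots> = Iop" using S'(3) Iop_left[OF T] T'(3) by simp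
  finally have i2: "(T' \<circ> S') \<circ> (S \<circ> T) = Iop" .
  have "M \<in> F \<longleftrightarrow> (S \<circ> T) ` M \<in> F" if M: "closed_subspace M" for M
  proof -
    have c: "closed_subspace (T ` M)" using img_closed[OF T T'(1) T'(2,3) M] .
    show ?thesis using ColD(3)[OF assms(2) M] ColD(3)[OF assms(1) c] by (simp add: image_comp)
  qed
  moreover have "T' \<circ> S' \<in> BOp" using BOp_comp[OF T'(1) S'(1)] .
  ultimately show ?thesis unfolding Col_def invertible_in_def using BOp_comp[OF S T] i1 i2 by blast
qed

lemma Iop_Col: "Iop \<in> Col F"
proof -
  have "Iop ` M = M" if "closed_subspace M" for M
    using closed_subspaceD(1)[OF that] by (force simp: Iop_def)
  moreover have "Iop \<circ> Iop = Iop" using Iop_left[OF Iop_BOp] .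
  ultimately show ?thesis unfolding Col_def invertible_in_def using Iop_BOp by auto
qed

lemma group_ColG: "group (ColG F)"
proof (rule groupI)
  fix x assume x: "x \<in> carrier (ColG F)"
  then have "x \<in> Col F" by (simp add: ColG_def)
  then obtain S' where "S' \<in> BOp" "x \<circ> S' = Iop" "S' \<circ> x = Iop" using ColD(2) by blast
  then have "S' \<in> Col F" using Col_inv \<open>x \<in> Col F\<close> by blast
  then show "\<exists>y\<in>carrier (ColG F). y \<otimes>\<^bsub>ColG F\<^esub> x = \<one>\<^bsub>ColG F\<^esub>"
    using \<open>S' \<circ> x = Iop\<close> by (auto simp: ColG_def)
qed (auto simp: ColG_def Col_comp Iop_Col o_assoc Iop_left ColD(1))

locale th =
  fixes \<theta>1 \<theta>2 :: "real \<Rightarrow> real"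
  assumes th1_bij: "bij_betw \<theta>1 {0..1} {-1..0}"
      and th1_dec: "\<forall>s\<in>{0..1}. \<forall>t\<in>{0..1}. s < t \<longrightarrow> \<theta>1 t < \<theta>1 s"
      and th2_bij: "bij_betw \<theta>2 {0..1} {0..1}"
      and th2_inc: "strict_mono_on {0..1} \<theta>2"
begin

abbreviation "N \<equiv> Nt \<theta>1 \<theta>2"

lemma th1_in: "t \<in> {0..1} \<Longrightarrow> \<theta>1 t \<in> {-1..0}"
  using th1_bij by (rule bij_betw_apply)
lemma th2_in: "t \<in> {0..1} \<Longrightarrow> \<theta>2 t \<in> {0..1}"
  using th2_bij by (rule bij_betw_apply)
lemma th1_II: assumes "t \<in> {0..1}" shows "\<theta>1 t \<in> II"
proof - have "\<theta>1 t \<in> {-1..0}" using th1_in assms . then show ?thesis by auto qed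
lemma th2_II: assumes "t \<in> {0..1}" shows "\<theta>2 t \<in> II"
proof - have "\<theta>2 t \<in> {0..1}" using th2_in assms . then show ?thesis by auto qed

lemma th1_surj: assumes "x \<in> {-1..0}" obtains t where "t \<in> {0..1}" "\<theta>1 t = x"
proof -
  have "x \<in> \<theta>1 ` {0..1}" using th1_bij assms by (simp add: bij_betw_def)
  then show ?thesis using that by blast
qed
lemma th2_surj: assumes "x \<in> {0..1}" obtains t where "t \<in> {0..1}" "\<theta>2 t = x"
proof -
  have "x \<in> \<theta>2 ` {0..1}" using th2_bij assms by (simp add: bij_betw_def)
  then show ?thesis using that by blast
qed

lemma th1_lt: "s \<in> {0..1} \<Longrightarrow> t \<in> {0..1} \<Longrightarrow> \<theta>1 s < \<theta>1 t \<longleftrightarrow> t < s"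
  using th1_dec by (metis linorder_neqE_linordered_idom order_less_asym order_less_irrefl)
lemma th1_le: "s \<in> {0..1} \<Longrightarrow> t \<in> {0..1} \<Longrightarrow> \<theta>1 s \<le> \<theta>1 t \<longleftrightarrow> t \<le> s"
  using th1_lt by (meson linorder_not_le)
lemma th1_eq: assumes "s \<in> {0..1}" "t \<in> {0..1}" shows "\<theta>1 s = \<theta>1 t \<longleftrightarrow> t = s"
proof
  assume "\<theta>1 s = \<theta>1 t" then have "t \<le> s" "s \<le> t" using th1_le[of s t] th1_le[of t s] assms by auto
  then show "t = s" by simp
qed simp
lemma th2_lt: "s \<in> {0..1} \<Longrightarrow> t \<in> {0..1} \<Longrightarrow> \<theta>2 s < \<theta>2 t \<longleftrightarrow> s < t"
  using th2_inc unfolding strict_mono_on_def monotone_on_def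
  by (metis linorder_neqE_linordered_idom order_less_asym order_less_irrefl)
lemma th2_le: "s \<in> {0..1} \<Longrightarrow> t \<in> {0..1} \<Longrightarrow> \<theta>2 s \<le> \<theta>2 t \<longleftrightarrow> s \<le> t"
  using th2_lt by (meson linorder_not_le)
lemma th2_eq: assumes "s \<in> {0..1}" "t \<in> {0..1}" shows "\<theta>2 s = \<theta>2 t \<longleftrightarrow> s = t"
proof
  assume "\<theta>2 s = \<theta>2 t" then have "t \<le> s" "s \<le> t" using th2_le[of s t] th2_le[of t s] assms by auto
  then show "s = t" by simp
qed simp

lemma th1_0: "\<theta>1 0 = 0"
proof -
  obtain u where u: "u \<in> {0..1}" "\<theta>1 u = 0" using th1_surj[of 0] by auto
  have "u = 0"
  proof (rule ccontr)
    assume "u \<noteq> 0" then have "0 < u" using u by auto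
    then have "\<theta>1 u < \<theta>1 0" using th1_lt[of u 0] u by auto
    then show False using th1_in[of 0] u by auto
  qed
  then show ?thesis using u by simp
qed

lemma th2_0: "\<theta>2 0 = 0"
proof -
  obtain u where u: "u \<in> {0..1}" "\<theta>2 u = 0" using th2_surj[of 0] by auto
  have "u = 0"
  proof (rule ccontr)
    assume "u \<noteq> 0" then have "0 < u" using u by auto
    then have "\<theta>2 0 < \<theta>2 u" using th2_lt[of 0 u] u by auto
    then show False using th2_in[of 0] u by auto
  qed
  then show ?thesis using u by simp
qed

lemma th_pos: assumes "t \<in> {0..1}" "0 < t" shows "\<theta>1 t < 0" "0 < \<theta>2 t"
  using th1_lt[of t 0] th2_lt[of 0 t] assms th1_0 th2_0 by auto

lemma N_sub_iff: assumes "s \<in> {0..1}" "t \<in> {0..1}" shows "N s \<subseteq> N t \<longleftrightarrow> s \<le> t"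
proof
  assume "s \<le> t" then show "N s \<subseteq> N t"
    unfolding Nt_Z using assms th1_le th2_le by (intro Z_mono) auto
next
  assume sub: "N s \<subseteq> N t"
  show "s \<le> t"
  proof (rule ccontr)
    assume "\<not> s \<le> t" then have "t < s" "0 < s" using assms by auto
    then have "\<theta>1 s < \<theta>2 s" using th_pos[OF assms(1)] by auto
    then have "\<theta>1 t \<le> \<theta>1 s" using Z_sub(1)[OF th1_II[OF assms(1)] th2_II[OF assms(1)]] sub
      unfolding Nt_Z by blast
    then show False using th1_lt[OF assms(1,2)] \<open>t < s\<close> by auto
  qed
qed

lemma N_inj: "s \<in> {0..1} \<Longrightarrow> t \<in> {0..1} \<Longrightarrow> N s = N t \<Longrightarrow> s = t"
  using N_sub_iff by (metis order_antisym order_refl)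

lemma N_closed: "closed_subspace (N t)" unfolding Nt_Z by (rule Z_closed)
lemma N_C0: "N t \<subseteq> C0" unfolding Nt_Z by (rule Z_C0)

lemma Gamma_th_iff: "\<phi> \<in> Gamma_th \<theta>1 \<theta>2 \<longleftrightarrow> \<phi> \<in> Gamma \<and>
   (\<forall>t\<in>{0..1}. \<exists>s\<in>{0..1}. \<phi> (\<theta>1 t) = \<theta>1 s \<and> \<phi> (\<theta>2 t) = \<theta>2 s)"
proof
  assume a: "\<phi> \<in> Gamma_th \<theta>1 \<theta>2"
  have "\<exists>s\<in>{0..1}. \<phi> (\<theta>1 t) = \<theta>1 s \<and> \<phi> (\<theta>2 t) = \<theta>2 s" if t: "t \<in> {0..1}" for t
  proof -
    have h: "\<phi> (\<theta>1 t) \<in> {-1..0}" "\<phi> (\<theta>2 t) \<in> {0..1}"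
      "inv_into {0..1} \<theta>1 (\<phi> (\<theta>1 t)) = inv_into {0..1} \<theta>2 (\<phi> (\<theta>2 t))"
      using a t unfolding Gamma_th_def by auto
    define s where "s = inv_into {0..1} \<theta>1 (\<phi> (\<theta>1 t))"
    have "s \<in> {0..1}" unfolding s_def using bij_betw_inv_into[OF th1_bij] h(1) by (rule bij_betw_apply)
    moreover have "\<theta>1 s = \<phi> (\<theta>1 t)" unfolding s_def using th1_bij h(1) by (simp add: bij_betw_inv_into_right)
    moreover have "\<theta>2 s = \<phi> (\<theta>2 t)" unfolding s_def h(3) using th2_bij h(2) by (simp add: bij_betw_inv_into_right)
    ultimately show ?thesis by metis
  qed
  then show "\<phi> \<in> Gamma \<and> (\<forall>t\<in>{0..1}. \<exists>s\<in>{0..1}. \<phi> (\<theta>1 t) = \<theta>1 s \<and> \<phi> (\<theta>2 t) = \<theta>2 s)"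
    using a unfolding Gamma_th_def by blast
next
  assume a: "\<phi> \<in> Gamma \<and> (\<forall>t\<in>{0..1}. \<exists>s\<in>{0..1}. \<phi> (\<theta>1 t) = \<theta>1 s \<and> \<phi> (\<theta>2 t) = \<theta>2 s)"
  have "\<phi> (\<theta>1 t) \<in> {-1..0} \<and> \<phi> (\<theta>2 t) \<in> {0..1}
     \<and> inv_into {0..1} \<theta>1 (\<phi> (\<theta>1 t)) = inv_into {0..1} \<theta>2 (\<phi> (\<theta>2 t))" if t: "t \<in> {0..1}" for t
  proof -
    obtain s where s: "s \<in> {0..1}" "\<phi> (\<theta>1 t) = \<theta>1 s" "\<phi> (\<theta>2 t) = \<theta>2 s" using a t by blast
    have "inv_into {0..1} \<theta>1 (\<theta>1 s) = s" using th1_bij s(1) by (simp add: bij_betw_inv_into_left)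
    moreover have "inv_into {0..1} \<theta>2 (\<theta>2 s) = s" using th2_bij s(1) by (simp add: bij_betw_inv_into_left)
    ultimately show ?thesis using s th1_in th2_in by simp
  qed
  then show "\<phi> \<in> Gamma_th \<theta>1 \<theta>2" unfolding Gamma_th_def using a by blast
qed

lemma Gamma_thD: assumes "\<phi> \<in> Gamma_th \<theta>1 \<theta>2" "t \<in> {0..1}"
  obtains s where "s \<in> {0..1}" "\<phi> (\<theta>1 t) = \<theta>1 s" "\<phi> (\<theta>2 t) = \<theta>2 s"
  using assms Gamma_th_iff by blast

lemma Gamma_th_Gamma: "\<phi> \<in> Gamma_th \<theta>1 \<theta>2 \<Longrightarrow> \<phi> \<in> Gamma"
  unfolding Gamma_th_def by blast

lemma Gamma_th_zero: assumes "\<phi> \<in> Gamma_th \<theta>1 \<theta>2" shows "\<phi> 0 = 0"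
proof -
  obtain s where s: "s \<in> {0..1}" "\<phi> (\<theta>1 0) = \<theta>1 s" "\<phi> (\<theta>2 0) = \<theta>2 s"
    using Gamma_thD[OF assms, of 0] by auto
  have "\<theta>1 s = \<theta>2 s" using s th1_0 th2_0 by simp
  then have "s = 0" using th_pos[OF s(1)] s(1) by force
  then show ?thesis using s th1_0 by simp
qed

lemma Gamma_th_back: assumes "\<phi> \<in> Gamma_th \<theta>1 \<theta>2" "t \<in> {0..1}"
  obtains u where "u \<in> {0..1}" "\<phi> (\<theta>1 u) = \<theta>1 t" "\<phi> (\<theta>2 u) = \<theta>2 t"
proof -
  have G: "\<phi> \<in> Gamma" using Gamma_th_Gamma[OF assms(1)] .
  obtain y where y: "y \<in> II" "\<phi> y = \<theta>1 t" using Gamma_surj[OF G th1_II[OF assms(2)]] by blast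
  have "y \<le> 0"
  proof (rule ccontr)
    assume "\<not> y \<le> 0"
    then have "\<phi> 0 < \<phi> y" using GammaD(3)[OF G, of 0 y] y by auto
    then show False using Gamma_th_zero[OF assms(1)] y th1_in[OF assms(2)] by auto
  qed
  then obtain u where u: "u \<in> {0..1}" "\<theta>1 u = y" using th1_surj[of y] y by auto
  obtain s where s: "s \<in> {0..1}" "\<phi> (\<theta>1 u) = \<theta>1 s" "\<phi> (\<theta>2 u) = \<theta>2 s"
    using Gamma_thD[OF assms(1) u(1)] by blast
  have "s = t" using th1_eq[OF assms(2) s(1)] s(2) u(2) y(2) by simp
  then show ?thesis using that u s by blast
qed

lemma Gamma_th_ginv: assumes "\<phi> \<in> Gamma_th \<theta>1 \<theta>2" shows "ginv \<phi> \<in> Gamma_th \<theta>1 \<theta>2"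
proof -
  have G: "\<phi> \<in> Gamma" using Gamma_th_Gamma[OF assms(1)] .
  have "\<exists>s\<in>{0..1}. ginv \<phi> (\<theta>1 t) = \<theta>1 s \<and> ginv \<phi> (\<theta>2 t) = \<theta>2 s" if t: "t \<in> {0..1}" for t
  proof -
    obtain u where "u \<in> {0..1}" "\<phi> (\<theta>1 u) = \<theta>1 t" "\<phi> (\<theta>2 u) = \<theta>2 t"
      using Gamma_th_back[OF assms t] by blast
    then show ?thesis using ginv_app(2)[OF G] by metis
  qed
  then show ?thesis using Gamma_th_iff ginv_Gamma(1)[OF G] by blast
qed

lemma Gamma_th_comp: assumes "\<phi> \<in> Gamma_th \<theta>1 \<theta>2" "\<psi> \<in> Gamma_th \<theta>1 \<theta>2"
  shows "\<phi> \<circ> \<psi> \<in> Gamma_th \<theta>1 \<theta>2"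
proof -
  have "\<exists>s\<in>{0..1}. (\<phi> \<circ> \<psi>) (\<theta>1 t) = \<theta>1 s \<and> (\<phi> \<circ> \<psi>) (\<theta>2 t) = \<theta>2 s" if t: "t \<in> {0..1}" for t
  proof -
    obtain u where u: "u \<in> {0..1}" "\<psi> (\<theta>1 t) = \<theta>1 u" "\<psi> (\<theta>2 t) = \<theta>2 u"
      using Gamma_thD[OF assms(2) t] by blast
    obtain s where s: "s \<in> {0..1}" "\<phi> (\<theta>1 u) = \<theta>1 s" "\<phi> (\<theta>2 u) = \<theta>2 s"
      using Gamma_thD[OF assms(1) u(1)] by blast
    show ?thesis using u s by auto
  qed
  then show ?thesis using Gamma_th_iff Gamma_comp[OF Gamma_th_Gamma[OF assms(1)] Gamma_th_Gamma[OF assms(2)]] by blast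
qed

lemma id_Gamma_th: "id \<in> Gamma_th \<theta>1 \<theta>2"
  using Gamma_th_iff id_Gamma by auto

lemma subgroup_Gamma_th: "subgroup (Gamma_th \<theta>1 \<theta>2) GammaG"
proof (rule group.subgroupI[OF group_GammaG])
  show "Gamma_th \<theta>1 \<theta>2 \<subseteq> carrier GammaG" using Gamma_th_Gamma by (auto simp: GammaG_def)
  show "Gamma_th \<theta>1 \<theta>2 \<noteq> {}" using id_Gamma_th by blast
  show "inv\<^bsub>GammaG\<^esub> a \<in> Gamma_th \<theta>1 \<theta>2" if "a \<in> Gamma_th \<theta>1 \<theta>2" for a
    using inv_GammaG[OF Gamma_th_Gamma[OF that]] Gamma_th_ginv[OF that] by simp
  show "a \<otimes>\<^bsub>GammaG\<^esub> b \<in> Gamma_th \<theta>1 \<theta>2" if "a \<in> Gamma_th \<theta>1 \<theta>2" "b \<in> Gamma_th \<theta>1 \<theta>2" for a b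
    using Gamma_th_comp[OF that] by (simp add: GammaG_def)
qed

lemma Vop_N: assumes "\<phi> \<in> Gamma" "s \<in> {0..1}" "u \<in> {0..1}"
    "\<phi> (\<theta>1 s) = \<theta>1 u" "\<phi> (\<theta>2 s) = \<theta>2 u"
  shows "Vop \<phi> ` N u = N s"
  unfolding Nt_Z using Vop_Z[OF assms(1) th1_II[OF assms(3)] th2_II[OF assms(3)]]
    ginv_app(2)[OF assms(1)] assms(4,5) by metis

lemma Vop_N_th: assumes "\<phi> \<in> Gamma_th \<theta>1 \<theta>2" "t \<in> {0..1}"
  shows "Vop \<phi> ` N t \<in> Nest \<theta>1 \<theta>2"
proof -
  obtain u where "u \<in> {0..1}" "\<phi> (\<theta>1 u) = \<theta>1 t" "\<phi> (\<theta>2 u) = \<theta>2 t"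
    using Gamma_th_back[OF assms] by blast
  then have "Vop \<phi> ` N t = N u" using Vop_N[OF Gamma_th_Gamma[OF assms(1)] _ assms(2)] by blast
  then show ?thesis unfolding Nest_def using \<open>u \<in> {0..1}\<close> by blast
qed

lemma N_Nest: "t \<in> {0..1} \<Longrightarrow> N t \<in> Nest \<theta>1 \<theta>2" unfolding Nest_def by blast

lemma NestE: assumes "M \<in> Nest \<theta>1 \<theta>2" obtains t where "t \<in> {0..1}" "M = N t"
  using assms unfolding Nest_def by blast

lemma Vop_Col_if: assumes "\<phi> \<in> Gamma_th \<theta>1 \<theta>2" shows "Vop \<phi> \<in> Col (Nest \<theta>1 \<theta>2)"
proof -
  have G: "\<phi> \<in> Gamma" using Gamma_th_Gamma[OF assms] .
  have Gi: "ginv \<phi> \<in> Gamma_th \<theta>1 \<theta>2" using Gamma_th_ginv[OF assms] .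
  have "M \<in> Nest \<theta>1 \<theta>2 \<longleftrightarrow> Vop \<phi> ` M \<in> Nest \<theta>1 \<theta>2" if M: "closed_subspace M" for M
  proof
    assume "M \<in> Nest \<theta>1 \<theta>2"
    then obtain t where "t \<in> {0..1}" "M = N t" by (rule NestE)
    then show "Vop \<phi> ` M \<in> Nest \<theta>1 \<theta>2" using Vop_N_th[OF assms] by blast
  next
    assume "Vop \<phi> ` M \<in> Nest \<theta>1 \<theta>2"
    then obtain t where t: "t \<in> {0..1}" "Vop \<phi> ` M = N t" by (rule NestE)
    have "M = Vop (ginv \<phi>) ` Vop \<phi> ` M"
      using img_inv[OF Vop_inv(2)[OF G] closed_subspaceD(1)[OF M]] by simp
    then show "M \<in> Nest \<theta>1 \<theta>2" using Vop_N_th[OF Gi t(1)] t(2) by simp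
  qed
  then show ?thesis unfolding Col_def invertible_in_def
    using Vop_BOp[OF G] Vop_BOp[OF ginv_Gamma(1)[OF G]] Vop_inv[OF G] by blast
qed

lemma Vop_Col_only_if: assumes G: "\<phi> \<in> Gamma" and C: "Vop \<phi> \<in> Col (Nest \<theta>1 \<theta>2)"
  shows "\<phi> \<in> Gamma_th \<theta>1 \<theta>2"
proof -
  define \<psi> where "\<psi> = ginv \<phi>"
  have P: "\<psi> \<in> Gamma" unfolding \<psi>_def using ginv_Gamma(1)[OF G] .
  have pos: "\<exists>s\<in>{0..1}. 0 < s \<and> \<psi> (\<theta>1 t) = \<theta>1 s \<and> \<psi> (\<theta>2 t) = \<theta>2 s"
    if t: "t \<in> {0..1}" "0 < t" for t
  proof -
    have "Vop \<phi> ` N t \<in> Nest \<theta>1 \<theta>2" using ColD(3)[OF C N_closed] N_Nest[OF t(1)] by blast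
    then obtain s where s: "s \<in> {0..1}" "Vop \<phi> ` N t = N s" by (rule NestE)
    have eq: "Z (\<psi> (\<theta>1 t)) (\<psi> (\<theta>2 t)) = Z (\<theta>1 s) (\<theta>2 s)"
      using s(2) Vop_Z[OF G th1_II[OF t(1)] th2_II[OF t(1)]] unfolding Nt_Z \<psi>_def by simp
    have a: "\<psi> (\<theta>1 t) \<in> II" "\<psi> (\<theta>2 t) \<in> II" using GammaD(2)[OF P] th1_II th2_II t by auto
    have lt: "\<psi> (\<theta>1 t) < \<psi> (\<theta>2 t)" using GammaD(3)[OF P th1_II[OF t(1)] th2_II[OF t(1)]] th_pos[OF t] by linarith
    have b1: "\<theta>1 s \<le> \<psi> (\<theta>1 t)" "\<psi> (\<theta>2 t) \<le> \<theta>2 s" using Z_sub[OF a lt] eq by auto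
    have "s \<noteq> 0"
    proof
      assume "s = 0" then show False using b1 lt th1_0 th2_0 by simp
    qed
    then have s0: "0 < s" using s(1) by auto
    have lt2: "\<theta>1 s < \<theta>2 s" using th_pos[OF s(1) s0] by linarith
    have b2: "\<psi> (\<theta>1 t) \<le> \<theta>1 s" "\<theta>2 s \<le> \<psi> (\<theta>2 t)"
      using Z_sub[OF th1_II[OF s(1)] th2_II[OF s(1)] lt2 equalityD2[OF eq]] by auto
    show ?thesis using b1 b2 s(1) s0 by (intro bexI[of _ s]) auto
  qed
  have z: "\<psi> 0 = 0"
  proof -
    obtain y where y: "y \<in> II" "\<psi> y = 0" using Gamma_surj[OF P, of 0] by auto
    have "y = 0"
    proof (rule ccontr)
      assume "y \<noteq> 0"
      then consider "y < 0" | "0 < y" by linarith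
      then show False
      proof cases
        case 1
        then obtain t where t: "t \<in> {0..1}" "\<theta>1 t = y" using th1_surj[of y] y(1) by auto
        then have "t \<noteq> 0" using th1_0 1 by auto
        then have "0 < t" using t by auto
        then show False using pos[OF t(1)] th_pos t y by force
      next
        case 2
        then obtain t where t: "t \<in> {0..1}" "\<theta>2 t = y" using th2_surj[of y] y(1) by auto
        then have "t \<noteq> 0" using th2_0 2 by auto
        then have "0 < t" using t by auto
        then show False using pos[OF t(1)] th_pos t y by force
      qed
    qed
    then show ?thesis using y by simp
  qed
  have "\<exists>s\<in>{0..1}. \<psi> (\<theta>1 t) = \<theta>1 s \<and> \<psi> (\<theta>2 t) = \<theta>2 s" if t: "t \<in> {0..1}" for t
  proof (cases "t = 0")
    case True then show ?thesis using z th1_0 th2_0 by (intro bexI[of _ 0]) auto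
  next
    case False then show ?thesis using pos[OF t] t by force
  qed
  then have "\<psi> \<in> Gamma_th \<theta>1 \<theta>2" using Gamma_th_iff P by blast
  then have "ginv \<psi> \<in> Gamma_th \<theta>1 \<theta>2" by (rule Gamma_th_ginv)
  then show ?thesis unfolding \<psi>_def using ginv_ginv[OF G] by simp
qed

lemma Vop_Col_iff: "\<phi> \<in> Gamma \<Longrightarrow> Vop \<phi> \<in> Col (Nest \<theta>1 \<theta>2) \<longleftrightarrow> \<phi> \<in> Gamma_th \<theta>1 \<theta>2"
  using Vop_Col_if Vop_Col_only_if by blast

lemma subgroup_O: "subgroup (Vop ` Gamma_th \<theta>1 \<theta>2) (ColG (Nest \<theta>1 \<theta>2))"
proof (rule group.subgroupI[OF group_ColG])
  show "Vop ` Gamma_th \<theta>1 \<theta>2 \<subseteq> carrier (ColG (Nest \<theta>1 \<theta>2))"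
    using Vop_Col_if by (auto simp: ColG_def)
  show "Vop ` Gamma_th \<theta>1 \<theta>2 \<noteq> {}" using id_Gamma_th by blast
  fix a assume "a \<in> Vop ` Gamma_th \<theta>1 \<theta>2"
  then obtain \<phi> where \<phi>: "\<phi> \<in> Gamma_th \<theta>1 \<theta>2" "a = Vop \<phi>" by blast
  have G: "\<phi> \<in> Gamma" using Gamma_th_Gamma[OF \<phi>(1)] .
  have "inv\<^bsub>ColG (Nest \<theta>1 \<theta>2)\<^esub> a = Vop (ginv \<phi>)"
    using group.inv_equality[OF group_ColG[of "Nest \<theta>1 \<theta>2"]]
      Vop_inv(2)[OF G] Vop_Col_if[OF \<phi>(1)] Vop_Col_if[OF Gamma_th_ginv[OF \<phi>(1)]] \<phi>(2)
    by (simp add: ColG_def)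
  then show "inv\<^bsub>ColG (Nest \<theta>1 \<theta>2)\<^esub> a \<in> Vop ` Gamma_th \<theta>1 \<theta>2"
    using Gamma_th_ginv[OF \<phi>(1)] by simp
  fix b assume "b \<in> Vop ` Gamma_th \<theta>1 \<theta>2"
  then obtain \<kappa> where \<kappa>: "\<kappa> \<in> Gamma_th \<theta>1 \<theta>2" "b = Vop \<kappa>" by blast
  have "a \<otimes>\<^bsub>ColG (Nest \<theta>1 \<theta>2)\<^esub> b = Vop (\<kappa> \<circ> \<phi>)"
    using Vop_comp[OF G Gamma_th_Gamma[OF \<kappa>(1)]] \<phi>(2) \<kappa>(2) by (simp add: ColG_def)
  then show "a \<otimes>\<^bsub>ColG (Nest \<theta>1 \<theta>2)\<^esub> b \<in> Vop ` Gamma_th \<theta>1 \<theta>2"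
    using Gamma_th_comp[OF \<kappa>(1) \<phi>(1)] by simp
qed

lemma GrpD: assumes "A \<in> Grp (Alg (Nest \<theta>1 \<theta>2))"
  obtains A' where "A \<in> BOp" "A' \<in> BOp" "A \<circ> A' = Iop" "A' \<circ> A = Iop"
    "\<And>M. M \<in> Nest \<theta>1 \<theta>2 \<Longrightarrow> A ` M = M" "\<And>M. M \<in> Nest \<theta>1 \<theta>2 \<Longrightarrow> A' ` M = M"
proof -
  obtain A' where A': "A' \<in> Alg (Nest \<theta>1 \<theta>2)" "A \<circ> A' = Iop" "A' \<circ> A = Iop"
    and A: "A \<in> Alg (Nest \<theta>1 \<theta>2)"
    using assms unfolding Grp_def invertible_in_def by blast
  have s1: "A ` M \<subseteq> M" "A' ` M \<subseteq> M" if "M \<in> Nest \<theta>1 \<theta>2" for M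
    using A A' that unfolding Alg_def by blast+
  have MC: "M \<subseteq> C0" if "M \<in> Nest \<theta>1 \<theta>2" for M using that N_C0 by (auto elim: NestE)
  have e1: "A ` M = M" if "M \<in> Nest \<theta>1 \<theta>2" for M
  proof -
    have "M = A ` A' ` M" using img_inv[OF A'(2) MC[OF that]] by simp
    also have "\<dots> \<subseteq> A ` M" using s1(2)[OF that] by blast
    finally show ?thesis using s1(1)[OF that] by blast
  qed
  have e2: "A' ` M = M" if "M \<in> Nest \<theta>1 \<theta>2" for M
  proof -
    have "M = A' ` A ` M" using img_inv[OF A'(3) MC[OF that]] by simp
    also have "\<dots> \<subseteq> A' ` M" using s1(1)[OF that] by blast
    finally show ?thesis using s1(2)[OF that] by blast
  qed
  show ?thesis using that[OF _ _ A'(2,3) e1 e2] A A' unfolding Alg_def by blast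
qed

lemma Grp_Col: assumes "A \<in> Grp (Alg (Nest \<theta>1 \<theta>2))" shows "A \<in> Col (Nest \<theta>1 \<theta>2)"
proof -
  obtain A' where A: "A \<in> BOp" "A' \<in> BOp" "A \<circ> A' = Iop" "A' \<circ> A = Iop"
    "\<And>M. M \<in> Nest \<theta>1 \<theta>2 \<Longrightarrow> A ` M = M" "\<And>M. M \<in> Nest \<theta>1 \<theta>2 \<Longrightarrow> A' ` M = M"
    using GrpD[OF assms] by metis
  have "M \<in> Nest \<theta>1 \<theta>2 \<longleftrightarrow> A ` M \<in> Nest \<theta>1 \<theta>2" if M: "closed_subspace M" for M
  proof
    assume "M \<in> Nest \<theta>1 \<theta>2" then show "A ` M \<in> Nest \<theta>1 \<theta>2" using A(5) by simp
  next
    assume a: "A ` M \<in> Nest \<theta>1 \<theta>2"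
    have "M = A' ` A ` M" using img_inv[OF A(4) closed_subspaceD(1)[OF M]] by simp
    then show "M \<in> Nest \<theta>1 \<theta>2" using A(6)[OF a] a by simp
  qed
  then show ?thesis unfolding Col_def invertible_in_def using A(1-4) by blast
qed

lemma Iop_Grp: "Iop \<in> Grp (Alg (Nest \<theta>1 \<theta>2))"
proof -
  have "Iop ` M \<subseteq> M" if "M \<in> Nest \<theta>1 \<theta>2" for M
    using that N_C0 by (force simp: Iop_def elim: NestE)
  then have "Iop \<in> Alg (Nest \<theta>1 \<theta>2)" unfolding Alg_def using Iop_BOp by blast
  moreover have "Iop \<circ> Iop = Iop" using Iop_left[OF Iop_BOp] .
  ultimately show ?thesis unfolding Grp_def invertible_in_def by blast
qed

lemma Grp_O: "Grp (Alg (Nest \<theta>1 \<theta>2)) \<inter> Vop ` Gamma_th \<theta>1 \<theta>2 = {Iop}"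
proof
  show "{Iop} \<subseteq> Grp (Alg (Nest \<theta>1 \<theta>2)) \<inter> Vop ` Gamma_th \<theta>1 \<theta>2"
    using Iop_Grp Vop_id id_Gamma_th by (metis Int_iff empty_subsetI image_eqI insert_subset)
  show "Grp (Alg (Nest \<theta>1 \<theta>2)) \<inter> Vop ` Gamma_th \<theta>1 \<theta>2 \<subseteq> {Iop}"
  proof
    fix X assume X: "X \<in> Grp (Alg (Nest \<theta>1 \<theta>2)) \<inter> Vop ` Gamma_th \<theta>1 \<theta>2"
    then obtain \<phi> where \<phi>: "\<phi> \<in> Gamma_th \<theta>1 \<theta>2" "X = Vop \<phi>" by blast
    have G: "\<phi> \<in> Gamma" using Gamma_th_Gamma[OF \<phi>(1)] .
    define \<psi> where "\<psi> = ginv \<phi>"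
    have P: "\<psi> \<in> Gamma_th \<theta>1 \<theta>2" unfolding \<psi>_def using Gamma_th_ginv[OF \<phi>(1)] .
    have PG: "\<psi> \<in> Gamma" using Gamma_th_Gamma[OF P] .
    have fix_: "Vop \<phi> ` M = M" if "M \<in> Nest \<theta>1 \<theta>2" for M
      using GrpD[of X] X \<phi>(2) that by (metis IntD1)
    have e: "\<psi> (\<theta>1 t) = \<theta>1 t \<and> \<psi> (\<theta>2 t) = \<theta>2 t" if t: "t \<in> {0..1}" for t
    proof (cases "t = 0")
      case True then show ?thesis using Gamma_th_zero[OF P] th1_0 th2_0 by simp
    next
      case False
      then have t0: "0 < t" using t by auto
      have eq: "Z (\<psi> (\<theta>1 t)) (\<psi> (\<theta>2 t)) = Z (\<theta>1 t) (\<theta>2 t)"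
        using fix_[OF N_Nest[OF t]] Vop_Z[OF G th1_II[OF t] th2_II[OF t]] unfolding Nt_Z \<psi>_def by simp
      have a: "\<psi> (\<theta>1 t) \<in> II" "\<psi> (\<theta>2 t) \<in> II" using GammaD(2)[OF PG] th1_II th2_II t by auto
      have lt0: "\<theta>1 t < \<theta>2 t" using th_pos[OF t t0] by linarith
      have lt: "\<psi> (\<theta>1 t) < \<psi> (\<theta>2 t)" using GammaD(3)[OF PG th1_II[OF t] th2_II[OF t] lt0] .
      have "\<theta>1 t \<le> \<psi> (\<theta>1 t)" "\<psi> (\<theta>2 t) \<le> \<theta>2 t" using Z_sub[OF a lt equalityD1[OF eq]] by auto
      moreover have "\<psi> (\<theta>1 t) \<le> \<theta>1 t" "\<theta>2 t \<le> \<psi> (\<theta>2 t)"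
        using Z_sub[OF th1_II[OF t] th2_II[OF t] lt0 equalityD2[OF eq]] by auto
      ultimately show ?thesis by simp
    qed
    have "\<psi> x = x" for x
    proof (cases "x \<in> II")
      case True
      then consider "x \<in> {-1..0}" | "x \<in> {0..1}" by fastforce
      then show ?thesis
      proof cases
        case 1 then obtain t where "t \<in> {0..1}" "\<theta>1 t = x" by (rule th1_surj)
        then show ?thesis using e by blast
      next
        case 2 then obtain t where "t \<in> {0..1}" "\<theta>2 t = x" by (rule th2_surj)
        then show ?thesis using e by blast
      qed
    next
      case False then show ?thesis using GammaD(4)[OF PG] by blast
    qed
    then have "\<psi> = id" by (simp add: fun_eq_iff)
    then have "\<phi> = id" using ginv_Gamma(2)[OF G] unfolding \<psi>_def by simp
    then show "X \<in> {Iop}" using \<phi>(2) Vop_id by simp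
  qed
qed

lemma Col_factor: assumes SC: "S \<in> Col (Nest \<theta>1 \<theta>2)"
  shows "\<exists>A T. S = A \<circ> T \<and> A \<in> Grp (Alg (Nest \<theta>1 \<theta>2)) \<and> T \<in> Vop ` Gamma_th \<theta>1 \<theta>2"
proof -
  have S: "S \<in> BOp" using ColD(1)[OF SC] .
  obtain S' where S': "S' \<in> BOp" "S \<circ> S' = Iop" "S' \<circ> S = Iop" using ColD(2)[OF SC] by blast
  have S'C: "S' \<in> Col (Nest \<theta>1 \<theta>2)" using Col_inv[OF SC S'] .
  have img: "\<exists>s. s \<in> {0..1} \<and> S ` N t = N s" if t: "t \<in> {0..1}" for t
  proof -
    have "S ` N t \<in> Nest \<theta>1 \<theta>2" using ColD(3)[OF SC N_closed[of t]] N_Nest[OF t] by blast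
    then obtain s where "s \<in> {0..1}" "S ` N t = N s" by (rule NestE)
    then show ?thesis by blast
  qed
  define \<sigma> where "\<sigma> t = (SOME s. s \<in> {0..1} \<and> S ` N t = N s)" for t
  have \<sigma>: "\<sigma> t \<in> {0..1}" "S ` N t = N (\<sigma> t)" if "t \<in> {0..1}" for t
    using someI_ex[OF img[OF that]] unfolding \<sigma>_def by blast+
  have \<sigma>_mono: "\<sigma> t \<le> \<sigma> t'" if "t \<in> {0..1}" "t' \<in> {0..1}" "t \<le> t'" for t t'
  proof -
    have "N t \<subseteq> N t'" using N_sub_iff that by blast
    then have "S ` N t \<subseteq> S ` N t'" by (rule image_mono)
    then show ?thesis using \<sigma>[OF that(1)] \<sigma>[OF that(2)] N_sub_iff by simp
  qed
  have \<sigma>_inj: "t = t'" if "t \<in> {0..1}" "t' \<in> {0..1}" "\<sigma> t = \<sigma> t'" for t t'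
  proof -
    have "S' ` S ` N t = S' ` S ` N t'" using \<sigma>[OF that(1)] \<sigma>[OF that(2)] that(3) by simp
    then have "N t = N t'" using img_inv[OF S'(3) N_C0] by simp
    then show ?thesis using N_inj that(1,2) by blast
  qed
  have \<sigma>_lt: "\<sigma> t < \<sigma> t'" if "t \<in> {0..1}" "t' \<in> {0..1}" "t < t'" for t t'
    using \<sigma>_mono[OF that(1,2)] \<sigma>_inj[OF that(1,2)] that(3) by force
  have \<sigma>_surj: "\<exists>t\<in>{0..1}. \<sigma> t = s" if s: "s \<in> {0..1}" for s
  proof -
    have "S' ` N s \<in> Nest \<theta>1 \<theta>2" using ColD(3)[OF S'C N_closed[of s]] N_Nest[OF s] by blast
    then obtain t where t: "t \<in> {0..1}" "S' ` N s = N t" by (rule NestE)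
    have "S ` N t = N s" using t(2) img_inv[OF S'(2) N_C0] by metis
    then have "\<sigma> t = s" using \<sigma>[OF t(1)] N_inj[OF \<sigma>(1)[OF t(1)] s] by simp
    then show ?thesis using t(1) by blast
  qed
  have \<sigma>0: "\<sigma> 0 = 0"
  proof -
    obtain t where t: "t \<in> {0..1}" "\<sigma> t = 0" using \<sigma>_surj[of 0] by auto
    have "t = 0"
    proof (rule ccontr)
      assume "t \<noteq> 0" then have "0 < t" using t by auto
      then have "\<sigma> 0 < \<sigma> t" using \<sigma>_lt[of 0 t] t by auto
      then show False using \<sigma>(1)[of 0] t by auto
    qed
    then show ?thesis using t by simp
  qed
  define i1 where "i1 = inv_into {0..1} \<theta>1"
  define i2 where "i2 = inv_into {0..1} \<theta>2"
  have i1: "i1 (\<theta>1 t) = t" if "t \<in> {0..1}" for t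
    unfolding i1_def using th1_bij that by (simp add: bij_betw_inv_into_left)
  have i2: "i2 (\<theta>2 t) = t" if "t \<in> {0..1}" for t
    unfolding i2_def using th2_bij that by (simp add: bij_betw_inv_into_left)
  define \<kappa> where "\<kappa> x = (if x \<in> {-1..0} then \<theta>1 (\<sigma> (i1 x))
      else if x \<in> {0<..1} then \<theta>2 (\<sigma> (i2 x)) else x)" for x
  have k1: "\<kappa> (\<theta>1 t) = \<theta>1 (\<sigma> t)" if t: "t \<in> {0..1}" for t
    using th1_in[OF t] i1[OF t] unfolding \<kappa>_def by simp
  have k2: "\<kappa> (\<theta>2 t) = \<theta>2 (\<sigma> t)" if t: "t \<in> {0..1}" for t
  proof (cases "t = 0")
    case True
    have "\<kappa> 0 = \<theta>1 (\<sigma> (i1 0))" unfolding \<kappa>_def by simp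
    also have "\<dots> = 0" using i1[of 0] th1_0 \<sigma>0 by simp
    finally show ?thesis using True th2_0 \<sigma>0 by simp
  next
    case False
    then have "0 < t" using t by auto
    then have "\<theta>2 t \<in> {0<..1}" using th_pos[OF t] th2_in[OF t] by auto
    then show ?thesis using i2[OF t] unfolding \<kappa>_def by auto
  qed
  have pos2: "0 < \<theta>2 (\<sigma> t)" if "t \<in> {0..1}" "0 < t" for t
    using \<sigma>_lt[of 0 t] that \<sigma>0 th_pos[OF \<sigma>(1)[OF that(1)]] by auto
  have cover: "(\<exists>t\<in>{0..1}. x = \<theta>1 t) \<or> (\<exists>t\<in>{0..1}. 0 < t \<and> x = \<theta>2 t)" if x: "x \<in> II" for x
  proof (cases "x \<le> 0")
    case True then obtain t where "t \<in> {0..1}" "\<theta>1 t = x" using th1_surj[of x] x by auto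
    then have "\<exists>t\<in>{0..1}. x = \<theta>1 t" by blast
    then show ?thesis by (rule disjI1)
  next
    case False then obtain t where t: "t \<in> {0..1}" "\<theta>2 t = x" using th2_surj[of x] x by auto
    then have "t \<noteq> 0" using False th2_0 by auto
    then have "0 < t" using t(1) by auto
    then have "\<exists>t\<in>{0..1}. 0 < t \<and> x = \<theta>2 t" using t by blast
    then show ?thesis by (rule disjI2)
  qed
  have kG: "\<kappa> \<in> Gamma"
  proof -
    have inII: "\<kappa> x \<in> II" if x: "x \<in> II" for x
      using cover[OF x]
    proof
      assume "\<exists>t\<in>{0..1}. x = \<theta>1 t"
      then obtain t where t: "t \<in> {0..1}" "x = \<theta>1 t" by blast
      show ?thesis using k1[OF t(1)] th1_II[OF \<sigma>(1)[OF t(1)]] t(2) by simp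
    next
      assume "\<exists>t\<in>{0..1}. 0 < t \<and> x = \<theta>2 t"
      then obtain t where t: "t \<in> {0..1}" "x = \<theta>2 t" by blast
      show ?thesis using k2[OF t(1)] th2_II[OF \<sigma>(1)[OF t(1)]] t(2) by simp
    qed
    have sm: "\<kappa> x < \<kappa> y" if xy: "x \<in> II" "y \<in> II" "x < y" for x y
    proof -
      consider (a) a b where "a \<in> {0..1}" "b \<in> {0..1}" "x = \<theta>1 a" "y = \<theta>1 b"
        | (b) a b where "a \<in> {0..1}" "b \<in> {0..1}" "0 < b" "x = \<theta>1 a" "y = \<theta>2 b"
        | (c) a b where "a \<in> {0..1}" "b \<in> {0..1}" "0 < a" "x = \<theta>2 a" "y = \<theta>1 b"
        | (d) a b where "a \<in> {0..1}" "b \<in> {0..1}" "0 < a" "0 < b" "x = \<theta>2 a" "y = \<theta>2 b"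
        using cover[OF xy(1)] cover[OF xy(2)] by metis
      then show ?thesis
      proof cases
        case a
        then have "b < a" using th1_lt[of a b] xy(3) by simp
        then have "\<sigma> b < \<sigma> a" using \<sigma>_lt[of b a] a(1,2) by simp
        then have "\<theta>1 (\<sigma> a) < \<theta>1 (\<sigma> b)" using th1_lt[OF \<sigma>(1)[OF a(1)] \<sigma>(1)[OF a(2)]] by simp
        then show ?thesis using a k1 by simp
      next
        case b
        have "\<theta>1 (\<sigma> a) \<le> 0" using th1_in[OF \<sigma>(1)[OF b(1)]] by simp
        moreover have "0 < \<theta>2 (\<sigma> b)" using pos2[OF b(2,3)] .
        ultimately show ?thesis using b k1 k2 by simp
      next
        case c
        have "0 < \<theta>2 a" using th_pos[OF c(1,3)] by simp
        moreover have "\<theta>1 b \<le> 0" using th1_in[OF c(2)] by simp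
        ultimately show ?thesis using c xy(3) by simp
      next
        case d
        then have "a < b" using th2_lt[of a b] xy(3) by simp
        then have "\<sigma> a < \<sigma> b" using \<sigma>_lt[of a b] d(1,2) by simp
        then have "\<theta>2 (\<sigma> a) < \<theta>2 (\<sigma> b)" using th2_lt[OF \<sigma>(1)[OF d(1)] \<sigma>(1)[OF d(2)]] by simp
        then show ?thesis using d k2 by simp
      qed
    qed
    have sur: "y \<in> \<kappa> ` II" if y: "y \<in> II" for y
      using cover[OF y]
    proof
      assume "\<exists>t\<in>{0..1}. y = \<theta>1 t"
      then obtain t where t: "t \<in> {0..1}" "y = \<theta>1 t" by blast
      then obtain u where "u \<in> {0..1}" "\<sigma> u = t" using \<sigma>_surj by blast
      then show ?thesis using t k1 th1_II by (metis image_eqI)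
    next
      assume "\<exists>t\<in>{0..1}. 0 < t \<and> y = \<theta>2 t"
      then obtain t where t: "t \<in> {0..1}" "y = \<theta>2 t" by blast
      then obtain u where "u \<in> {0..1}" "\<sigma> u = t" using \<sigma>_surj by blast
      then show ?thesis using t k2 th2_II by (metis image_eqI)
    qed
    have smo: "strict_mono_on II \<kappa>" using sm by (intro strict_mono_onI)
    have "bij_betw \<kappa> II II" unfolding bij_betw_def
      using strict_mono_on_imp_inj_on[OF smo] inII sur by blast
    moreover have "\<forall>x. x \<notin> II \<longrightarrow> \<kappa> x = x" unfolding \<kappa>_def by auto
    ultimately show ?thesis unfolding Gamma_def using smo by blast
  qed
  have kT: "\<kappa> \<in> Gamma_th \<theta>1 \<theta>2" using Gamma_th_iff kG k1 k2 \<sigma>(1) by blast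
  define \<psi> where "\<psi> = ginv \<kappa>"
  have PT: "\<psi> \<in> Gamma_th \<theta>1 \<theta>2" unfolding \<psi>_def using Gamma_th_ginv[OF kT] .
  have PG: "\<psi> \<in> Gamma" using Gamma_th_Gamma[OF PT] .
  have VkN: "Vop \<kappa> ` N (\<sigma> u) = N u" if u: "u \<in> {0..1}" for u
    using Vop_N[OF kG u \<sigma>(1)[OF u] k1[OF u] k2[OF u]] .
  define A where "A = S \<circ> Vop \<kappa>"
  define A' where "A' = Vop \<psi> \<circ> S'"
  have AB: "A \<in> BOp" unfolding A_def using BOp_comp[OF S Vop_BOp[OF kG]] .
  have A'B: "A' \<in> BOp" unfolding A'_def using BOp_comp[OF Vop_BOp[OF PG] S'(1)] .
  have AN: "A ` M = M" "A' ` M = M" if M: "M \<in> Nest \<theta>1 \<theta>2" for M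
  proof -
    obtain t where t: "t \<in> {0..1}" "M = N t" using M by (rule NestE)
    obtain u where u: "u \<in> {0..1}" "\<sigma> u = t" using \<sigma>_surj[OF t(1)] by blast
    show "A ` M = M" unfolding A_def image_comp[symmetric] using t u VkN[OF u(1)] \<sigma>(2)[OF u(1)] by simp
    have "S' ` N t = N u" using \<sigma>(2)[OF u(1)] u(2) img_inv[OF S'(3) N_C0] by metis
    moreover have "Vop \<psi> ` N u = N t"
      using VkN[OF u(1)] u(2) img_inv[OF Vop_inv(2)[OF kG] N_C0] unfolding \<psi>_def by metis
    ultimately show "A' ` M = M" unfolding A'_def image_comp[symmetric] using t by simp
  qed
  have AA': "A \<circ> A' = Iop"
  proof -
    have "A \<circ> A' = S \<circ> (Vop \<kappa> \<circ> Vop \<psi>) \<circ> S'" unfolding A_def A'_def by (simp add: o_assoc)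
    also have "\<dots> = S \<circ> S'" using Vop_inv(1)[OF kG] Iop_right[OF S] unfolding \<psi>_def by simp
    finally show ?thesis using S'(2) by simp
  qed
  have A'A: "A' \<circ> A = Iop"
  proof -
    have "A' \<circ> A = Vop \<psi> \<circ> (S' \<circ> S) \<circ> Vop \<kappa>" unfolding A_def A'_def by (simp add: o_assoc)
    also have "\<dots> = Vop \<psi> \<circ> Vop \<kappa>" using S'(3) Iop_right[OF Vop_BOp[OF PG]] by simp
    finally show ?thesis using Vop_inv(2)[OF kG] unfolding \<psi>_def by simp
  qed
  have AAlg: "A \<in> Alg (Nest \<theta>1 \<theta>2)" "A' \<in> Alg (Nest \<theta>1 \<theta>2)"
    unfolding Alg_def using AB A'B AN by auto
  have AG: "A \<in> Grp (Alg (Nest \<theta>1 \<theta>2))"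
    unfolding Grp_def invertible_in_def using AAlg AA' A'A by blast
  have "A \<circ> Vop \<psi> = S \<circ> (Vop \<kappa> \<circ> Vop \<psi>)" unfolding A_def by (simp add: o_assoc)
  also have "\<dots> = S" using Vop_inv(1)[OF kG] Iop_right[OF S] unfolding \<psi>_def by simp
  finally show ?thesis using AG PT by blast
qed

end

theorem theorem5p6:
  fixes \<theta>1 \<theta>2 :: "real \<Rightarrow> real"
  assumes th1_bij: "bij_betw \<theta>1 {0..1} {-1..0}"
      and th1_dec: "\<forall>s\<in>{0..1}. \<forall>t\<in>{0..1}. s < t \<longrightarrow> \<theta>1 t < \<theta>1 s"
      and th2_bij: "bij_betw \<theta>2 {0..1} {0..1}"
      and th2_inc: "strict_mono_on {0..1} \<theta>2"
  shows "(group GammaG \<and> subgroup (Gamma_th \<theta>1 \<theta>2) GammaG)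
    \<and> (\<forall>\<phi>\<in>Gamma. Vop \<phi> \<in> Col (Nest \<theta>1 \<theta>2) \<longleftrightarrow> \<phi> \<in> Gamma_th \<theta>1 \<theta>2)
    \<and> (group (ColG (Nest \<theta>1 \<theta>2))
         \<and> subgroup (Vop ` Gamma_th \<theta>1 \<theta>2) (ColG (Nest \<theta>1 \<theta>2)))
    \<and> (Col (Nest \<theta>1 \<theta>2) = {A \<circ> T | A T. A \<in> Grp (Alg (Nest \<theta>1 \<theta>2)) \<and> T \<in> Vop ` Gamma_th \<theta>1 \<theta>2}
         \<and> Grp (Alg (Nest \<theta>1 \<theta>2)) \<inter> Vop ` Gamma_th \<theta>1 \<theta>2 = {Iop})"
proof -
  interpret th \<theta>1 \<theta>2 using assms by unfold_locales
  have eq: "Col (Nest \<theta>1 \<theta>2) = {A \<circ> T | A T. A \<in> Grp (Alg (Nest \<theta>1 \<theta>2)) \<and> T \<in> Vop ` Gamma_th \<theta>1 \<theta>2}"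
  proof
    show "Col (Nest \<theta>1 \<theta>2) \<subseteq> {A \<circ> T | A T. A \<in> Grp (Alg (Nest \<theta>1 \<theta>2)) \<and> T \<in> Vop ` Gamma_th \<theta>1 \<theta>2}"
      using Col_factor by blast
    show "{A \<circ> T | A T. A \<in> Grp (Alg (Nest \<theta>1 \<theta>2)) \<and> T \<in> Vop ` Gamma_th \<theta>1 \<theta>2} \<subseteq> Col (Nest \<theta>1 \<theta>2)"
      using Col_comp Grp_Col Vop_Col_if by blast
  qed
  show ?thesis using group_GammaG subgroup_Gamma_th Vop_Col_iff group_ColG subgroup_O eq Grp_O by blast
qed

end
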